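(* Let $R$ be a commutative ring, $A$ an $R$-algebra and $n,m$ positive integers. If $A^n$ can be generated by $m$ elements as an $R$-algebra, then $A^{n+1}$ can be generated by $m+1$ elements as an $R$-algebra. Consequently, if $\mathrm{gen}_m(A,R)$ is finite then the smallest number of generators of $A^{1+\mathrm{gen}_m(A,R)}$ as an $R$-algebra equals $m+1$.
   Context: Algebras are associative and unital; $A^n$ is the direct product of $n$ copies of $A$. $\mathrm{gen}_m(A,R)$ is the largest $k\in\mathbb Z\cup\{\infty\}$ such that $A^k$ can be generated by at most $m$ elements as an $R$-algebra. *)

theory Defs
  imports Main "HOL-Library.Extended_Nat"
begin

definition R_algebra :: "('r::comm_ring_1 \<Rightarrow> 'a::ring_1) \<Rightarrow> bool" where
  "R_algebra phi \<longleftrightarrow> phi 1 = 1 \<and> (\<forall>r s. phi (r + s) = phi r + phi s)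
     \<and> (\<forall>r s. phi (r * s) = phi r * phi s) \<and> (\<forall>r x. phi r * x = x * phi r)"

text \<open>The direct product A^n, represented as functions nat => 'a vanishing outside {..<n};
all operations are componentwise.\<close>
definition power_carrier :: "nat \<Rightarrow> (nat \<Rightarrow> 'a::zero) set" where
  "power_carrier n = {f. \<forall>i\<ge>n. f i = 0}"

text \<open>The R-subalgebra of A^n generated by G (contains the image of R, i.e. the scalars,
and is closed under addition and multiplication; this yields closure under scalar
multiplication and negation as well).\<close>
inductive_set subalg_gen :: "('r::comm_ring_1 \<Rightarrow> 'a::ring_1) \<Rightarrow> nat \<Rightarrow> (nat \<Rightarrow> 'a) set \<Rightarrow> (nat \<Rightarrow> 'a) set"
  for phi :: "'r::comm_ring_1 \<Rightarrow> 'a::ring_1" and n :: nat and G :: "(nat \<Rightarrow> 'a) set" where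
  gen: "g \<in> G \<Longrightarrow> g \<in> subalg_gen phi n G"
| scal: "(\<lambda>i. if i < n then phi r else 0) \<in> subalg_gen phi n G"
| add: "x \<in> subalg_gen phi n G \<Longrightarrow> y \<in> subalg_gen phi n G \<Longrightarrow> (\<lambda>i. x i + y i) \<in> subalg_gen phi n G"
| mult: "x \<in> subalg_gen phi n G \<Longrightarrow> y \<in> subalg_gen phi n G \<Longrightarrow> (\<lambda>i. x i * y i) \<in> subalg_gen phi n G"

definition can_gen :: "('r::comm_ring_1 \<Rightarrow> 'a::ring_1) \<Rightarrow> nat \<Rightarrow> nat \<Rightarrow> bool" where
  "can_gen phi n m \<longleftrightarrow> (\<exists>G. finite G \<and> card G \<le> m \<and> G \<subseteq> power_carrier n
      \<and> subalg_gen phi n G = power_carrier n)"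

definition gen_num :: "('r::comm_ring_1 \<Rightarrow> 'a::ring_1) \<Rightarrow> nat \<Rightarrow> enat" where
  "gen_num phi m = (if finite {k. can_gen phi k m} then enat (Max {k. can_gen phi k m}) else \<infinity>)"

end

theory Submission
  imports Defs
begin

lemma subalg_sub:
  assumes "G \<subseteq> power_carrier n" "x \<in> subalg_gen phi n G"
  shows "x \<in> power_carrier n"
  using assms(2) by induct (use assms(1) in \<open>auto simp: power_carrier_def\<close>)

lemma phi_m1:
  assumes "R_algebra phi"
  shows "phi (-1) = -1"
proof -
  have a: "\<forall>r s. phi (r + s) = phi r + phi s" and o: "phi 1 = 1"
    using assms by (auto simp: R_algebra_def)
  have "phi 0 = phi 0 + phi 0" using a by (metis add_0)
  hence z: "phi 0 = 0" by simp
  have "phi (-1) + phi 1 = phi 0" using a by (metis add.left_inverse)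
  thus ?thesis using z o by (simp add: eq_neg_iff_add_eq_0)
qed

lemma part1:
  fixes phi :: "'r::comm_ring_1 \<Rightarrow> 'a::ring_1"
  assumes R: "R_algebra phi" and n: "0 < n" and cg: "can_gen phi n m"
  shows "can_gen phi (n + 1) (m + 1)"
proof -
  obtain G where G: "finite G" "card G \<le> m" "G \<subseteq> power_carrier n"
    "subalg_gen phi n G = power_carrier n"
    using cg by (auto simp: can_gen_def)
  define lift :: "(nat \<Rightarrow> 'a) \<Rightarrow> nat \<Rightarrow> 'a" where
    "lift x = (\<lambda>i. if i < n then x i else if i = n then x 0 else 0)" for x
  define e :: "nat \<Rightarrow> 'a" where "e = (\<lambda>i. if i = n then 1 else 0)"
  define G' where "G' = lift ` G \<union> {e}"
  let ?S = "subalg_gen phi (n+1) G'"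
  have lift_in: "lift x \<in> ?S" if "x \<in> subalg_gen phi n G" for x
    using that
  proof induct
    case (gen g) thus ?case by (auto simp: G'_def intro: subalg_gen.gen)
  next
    case (scal r)
    have "lift (\<lambda>i. if i < n then phi r else 0) = (\<lambda>i. if i < n + 1 then phi r else 0)"
      using n by (auto simp: lift_def)
    thus ?case by (simp add: subalg_gen.scal)
  next
    case (add x y)
    have "lift (\<lambda>i. x i + y i) = (\<lambda>i. lift x i + lift y i)" by (auto simp: lift_def)
    thus ?case using add by (simp add: subalg_gen.add)
  next
    case (mult x y)
    have "lift (\<lambda>i. x i * y i) = (\<lambda>i. lift x i * lift y i)" by (auto simp: lift_def)
    thus ?case using mult by (simp add: subalg_gen.mult)
  qed
  have eS: "e \<in> ?S" by (auto simp: G'_def intro: subalg_gen.gen)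
  have m1S: "(\<lambda>i. if i < n + 1 then phi (-1) else 0) \<in> ?S" by (rule subalg_gen.scal)
  have G'c: "G' \<subseteq> power_carrier (n+1)"
    using G(3) by (auto simp: G'_def power_carrier_def lift_def e_def)
  have "power_carrier (n+1) \<subseteq> ?S"
  proof
    fix f :: "nat \<Rightarrow> 'a" assume f: "f \<in> power_carrier (n+1)"
    define a where "a = (\<lambda>i. if i < n then f i else 0)"
    define b where "b = (\<lambda>i. if i < n then f n else 0)"
    have "a \<in> subalg_gen phi n G" "b \<in> subalg_gen phi n G"
      using G(4) by (auto simp: a_def b_def power_carrier_def)
    hence la: "lift a \<in> ?S" and lb: "lift b \<in> ?S" using lift_in by auto
    have ea: "(\<lambda>i. e i * lift a i) \<in> ?S" using eS la by (rule subalg_gen.mult)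
    have ea2: "(\<lambda>i. (if i < n + 1 then phi (-1) else 0) * (e i * lift a i)) \<in> ?S"
      using m1S ea by (rule subalg_gen.mult)
    have t1: "(\<lambda>i. lift a i + (if i < n + 1 then phi (-1) else 0) * (e i * lift a i)) \<in> ?S"
      using la ea2 by (rule subalg_gen.add)
    have eb: "(\<lambda>i. e i * lift b i) \<in> ?S" using eS lb by (rule subalg_gen.mult)
    have t2: "(\<lambda>i. (lift a i + (if i < n + 1 then phi (-1) else 0) * (e i * lift a i)) + e i * lift b i) \<in> ?S"
      using t1 eb by (rule subalg_gen.add)
    have "(\<lambda>i. (lift a i + (if i < n + 1 then phi (-1) else 0) * (e i * lift a i)) + e i * lift b i) = f"
    proof
      fix i show "(lift a i + (if i < n + 1 then phi (-1) else 0) * (e i * lift a i)) + e i * lift b i = f i"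
        using f n phi_m1[OF R] by (auto simp: lift_def e_def a_def b_def power_carrier_def)
    qed
    thus "f \<in> ?S" using t2 by simp
  qed
  moreover have "?S \<subseteq> power_carrier (n+1)" using subalg_sub[OF G'c] by blast
  moreover have "finite G'" using G(1) by (simp add: G'_def)
  moreover have "card G' \<le> m + 1"
  proof -
    have "card G' \<le> card (lift ` G) + card {e}" unfolding G'_def by (rule card_Un_le)
    also have "\<dots> \<le> card G + 1" using card_image_le[OF G(1)] by simp
    finally show ?thesis using G(2) by simp
  qed
  ultimately show ?thesis using G'c unfolding can_gen_def by blast
qed

lemma can_gen_mono: "can_gen phi n k \<Longrightarrow> k \<le> m \<Longrightarrow> can_gen phi n m"
  unfolding can_gen_def by (meson order_trans)

theorem mainTheorem8:
  fixes phi :: "'r::comm_ring_1 \<Rightarrow> 'a::ring_1"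
  assumes "R_algebra phi"
  shows "(\<forall>n m. 0 < n \<longrightarrow> 0 < m \<longrightarrow> can_gen phi n m \<longrightarrow> can_gen phi (n + 1) (m + 1))
    \<and> (\<forall>m g. 0 < m \<longrightarrow> gen_num phi m = enat g \<longrightarrow> 1 \<le> g
         \<longrightarrow> (LEAST k. can_gen phi (g + 1) k) = m + 1)"
proof (intro conjI allI impI)
  fix n m :: nat assume "0 < n" "can_gen phi n m"
  thus "can_gen phi (n + 1) (m + 1)" using part1[OF assms] by blast
next
  fix m g :: nat assume "0 < m" "gen_num phi m = enat g" "1 \<le> g"
  hence fin: "finite {k. can_gen phi k m}" and mx: "Max {k. can_gen phi k m} = g"
    by (auto simp: gen_num_def split: if_splits)
  have nc: "\<not> can_gen phi (g + 1) k" if "k \<le> m" for k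
  proof
    assume "can_gen phi (g + 1) k"
    hence "g + 1 \<in> {k. can_gen phi k m}" using can_gen_mono that by blast
    hence "g + 1 \<le> g" using Max_ge[OF fin] mx by metis
    thus False by simp
  qed
  have "can_gen phi g m"
  proof (rule ccontr)
    assume "\<not> can_gen phi g m"
    have "{k. can_gen phi k m} \<noteq> {}"
    proof
      assume "{k. can_gen phi k m} = {}"
      moreover have "can_gen phi 0 m"
      proof -
        have "subalg_gen phi 0 {} = power_carrier 0"
        proof
          show "subalg_gen phi 0 {} \<subseteq> power_carrier 0" using subalg_sub[of "{}" 0] by auto
          have "(\<lambda>i. if i < 0 then phi 0 else 0) \<in> subalg_gen phi 0 {}" by (rule subalg_gen.scal)
          moreover have "power_carrier 0 = {(\<lambda>i. 0) :: nat \<Rightarrow> 'a}"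
            by (auto simp: power_carrier_def)
          ultimately show "power_carrier 0 \<subseteq> subalg_gen phi 0 {}" by simp
        qed
        thus ?thesis by (auto simp: can_gen_def power_carrier_def)
      qed
      ultimately show False by simp
    qed
    hence "g \<in> {k. can_gen phi k m}" using Max_in[OF fin] mx by metis
    thus False using \<open>\<not> can_gen phi g m\<close> by simp
  qed
  hence c: "can_gen phi (g + 1) (m + 1)" using part1[OF assms] \<open>1 \<le> g\<close> by simp
  show "(LEAST k. can_gen phi (g + 1) k) = m + 1"
  proof (rule Least_equality)
    show "can_gen phi (g + 1) (m + 1)" by (rule c)
    fix y assume "can_gen phi (g + 1) y"
    thus "m + 1 \<le> y" using nc[of y] by (cases "y \<le> m") auto
  qed
qed

end
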